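(* Let $n\ge 0$ and $l$ be integers with $n\le l\le 2n$, and fix a linear ordering of the alphabet $\{E,D,N\}$. Then $$\sum_{W\in Sch_L(n,l)} q^{\mathrm{maj}(W)}=\frac{1}{[l-n+1]}\begin{bmatrix}2(l-n)\\ l-n\end{bmatrix}_q\begin{bmatrix} l\\ 2n-l\end{bmatrix}_q \quad\text{if } E<N,$$ and $$\sum_{W\in Sch_L(n,l)} q^{\mathrm{maj}(W)}=\frac{q^{\,l-n}}{[l-n+1]}\begin{bmatrix}2(l-n)\\ l-n\end{bmatrix}_q\begin{bmatrix} l\\ 2n-l\end{bmatrix}_q \quad\text{if } E>N.$$
   Context: A Delannoy path from $(0,0)$ to $(m,n)$ is a lattice path using only the steps $E=(1,0)$, $D=(1,1)$, $N=(0,1)$; a path with $l$ steps is identified with the word $W=w_1w_2\cdots w_l$ over the alphabet $\{E,D,N\}$. $Del(m,n,l)$ denotes the set of Delannoy paths from $(0,0)$ to $(m,n)$ with exactly $l$ steps. A Schröder $n$-path is a Delannoy path from $(0,0)$ to $(n,n)$ that never goes (strictly) above the line $y=x$; $Sch_L(n,l)$ is the set of Schröder $n$-paths with exactly $l$ steps. Given a linear ordering of $\{E,D,N\}$, an index $i$ with $1\le i\le l-1$ is a descent of $W$ if $w_i>w_{i+1}$, and $\mathrm{maj}(W)=\sum_{i \text{ descent}} i$. Notation: $[k]=1+q+\cdots+q^{k-1}$, $[k]!=[1][2]\cdots[k]$ (with $[0]!=1$), and $\begin{bmatrix}a\\ b\end{bmatrix}_q=\frac{[a]!}{[b]![a-b]!}$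 for $0\le b\le a$. *)

theory Defs
  imports "HOL-Computational_Algebra.Polynomial"
begin

datatype step = E | D | N

text \<open>Endpoint coordinates of a word: x = #E + #D, y = #N + #D.\<close>
definition xcoord :: "step list \<Rightarrow> nat" where
  "xcoord w = count_list w E + count_list w D"

definition ycoord :: "step list \<Rightarrow> nat" where
  "ycoord w = count_list w N + count_list w D"

definition Del :: "nat \<Rightarrow> nat \<Rightarrow> nat \<Rightarrow> step list set" where
  "Del m n l = {w. length w = l \<and> xcoord w = m \<and> ycoord w = n}"

definition Sch_L :: "nat \<Rightarrow> nat \<Rightarrow> step list set" where
  "Sch_L n l = {w \<in> Del n n l. \<forall>k \<le> length w. ycoord (take k w) \<le> xcoord (take k w)}"

text \<open>Major index w.r.t. the linear order on steps given by an injective rank r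
  (a < b iff r a < r b). Positions are 1-based: i is a descent iff w_i > w_(i+1).\<close>
definition maj :: "(step \<Rightarrow> nat) \<Rightarrow> step list \<Rightarrow> nat" where
  "maj r w = (\<Sum>i \<in> {1..<length w}. if r (w ! (i - 1)) > r (w ! i) then i else 0)"

definition qint :: "nat \<Rightarrow> rat poly" where
  "qint k = (\<Sum>i<k. monom 1 i)"

definition qfact :: "nat \<Rightarrow> rat poly" where
  "qfact k = (\<Prod>i\<in>{1..k}. qint i)"

definition qbinom :: "nat \<Rightarrow> nat \<Rightarrow> rat poly" where
  "qbinom a b = (if b \<le> a then qfact a div (qfact b * qfact (a - b)) else 0)"

end

theory Submission
  imports Defs
begin


definition qq :: "rat poly" where "qq = [:0,1:]"

lemma monom1: "monom (1::rat) i = qq ^ i"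
  by (simp add: monom_altdef qq_def)

fun qb :: "nat \<Rightarrow> nat \<Rightarrow> rat poly" where
  "qb n 0 = 1"
| "qb 0 (Suc k) = 0"
| "qb (Suc n) (Suc k) = qb n k + qq ^ (Suc k) * qb n (Suc k)"

lemma qb_gt: "n < k \<Longrightarrow> qb n k = 0"
  by (induction n k rule: qb.induct) auto

lemma qint_alt: "qint k = (\<Sum>i<k. qq ^ i)"
  by (simp add: qint_def monom1)

lemma qint_add: "qint (a + b) = qint a + qq ^ a * qint b"
  by (induction b) (auto simp: qint_alt algebra_simps power_add)

lemma qint_nz: "0 < i \<Longrightarrow> qint i \<noteq> 0"
proof
  assume "0 < i" "qint i = 0"
  have "poly (qint i) 1 = of_nat i" by (simp add: qint_alt poly_sum qq_def)
  with \<open>qint i = 0\<close> \<open>0 < i\<close> show False by simp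
qed

lemma qfact_Suc: "qfact (Suc k) = qfact k * qint (Suc k)"
  by (simp add: qfact_def prod.cl_ivl_Suc)

lemma qfact_0[simp]: "qfact 0 = 1" by (simp add: qfact_def)

lemma qint_0[simp]: "qint 0 = 0" by (simp add: qint_def)

lemma qfact_nz: "qfact k \<noteq> 0"
  by (induction k) (auto simp: qfact_0 qfact_Suc qint_nz)

lemma qb_fact: "k \<le> n \<Longrightarrow> qb n k * qfact k * qfact (n - k) = qfact n"
proof (induction n arbitrary: k)
  case 0 then show ?case by simp
next
  case (Suc n)
  show ?case
  proof (cases k)
    case 0 then show ?thesis by simp
  next
    case (Suc j)
    with Suc.prems have jn: "j \<le> n" by simp
    have t1: "qb n j * qfact (Suc j) * qfact (n - j) = qfact n * qint (Suc j)"
    proof -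
      have "qb n j * qfact (Suc j) * qfact (n - j) = (qb n j * qfact j * qfact (n - j)) * qint (Suc j)"
        by (simp add: qfact_Suc ac_simps)
      also have "\<dots> = qfact n * qint (Suc j)" using Suc.IH[OF jn] by simp
      finally show ?thesis .
    qed
    have t2: "qb n (Suc j) * qfact (Suc j) * qfact (n - j) = qfact n * qint (n - j)"
    proof (cases "j < n")
      case True
      then have "n - j = Suc (n - Suc j)" by simp
      then have e: "qfact (n - j) = qfact (n - Suc j) * qint (n - j)" by (simp add: qfact_Suc)
      have "qb n (Suc j) * qfact (Suc j) * qfact (n - j) = (qb n (Suc j) * qfact (Suc j) * qfact (n - Suc j)) * qint (n - j)"
        by (simp add: e ac_simps)
      also have "\<dots> = qfact n * qint (n - j)" using Suc.IH[of "Suc j"] True by simp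
      finally show ?thesis .
    next
      case False
      then have "j = n" using jn by simp
      then show ?thesis by (simp add: qb_gt)
    qed
    have qi: "qint (Suc n) = qint (Suc j) + qq ^ Suc j * qint (n - j)"
      using qint_add[of "Suc j" "n - j"] jn by simp
    have "qb (Suc n) k * qfact k * qfact (Suc n - k)
        = qb n j * qfact (Suc j) * qfact (n - j) + qq ^ Suc j * (qb n (Suc j) * qfact (Suc j) * qfact (n - j))"
      using \<open>k = Suc j\<close> by (simp only: qb.simps diff_Suc_Suc) (simp add: algebra_simps)
    also have "\<dots> = qfact n * qint (Suc j) + qq ^ Suc j * (qfact n * qint (n - j))"
      by (simp only: t1 t2)
    also have "\<dots> = qfact n * qint (Suc n)" by (simp only: qi) (simp add: algebra_simps)
    also have "\<dots> = qfact (Suc n)" by (simp add: qfact_Suc)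
    finally show ?thesis .
  qed
qed

lemma qb_unique:
  assumes "k \<le> n" "P * qfact k * qfact (n - k) = qfact n"
  shows "P = qb n k"
proof -
  have "P * (qfact k * qfact (n - k)) = qb n k * (qfact k * qfact (n - k))"
    using assms qb_fact[OF assms(1)] by (simp add: mult.assoc)
  then show ?thesis using qfact_nz by simp
qed

lemma qb_pascal2:
  assumes "k \<le> n"
  shows "qb (Suc n) (Suc k) = qq ^ (n - k) * qb n k + qb n (Suc k)"
proof -
  have t1: "qb n k * qfact (Suc k) * qfact (n - k) = qfact n * qint (Suc k)"
  proof -
    have "qb n k * qfact (Suc k) * qfact (n - k) = (qb n k * qfact k * qfact (n - k)) * qint (Suc k)"
      by (simp add: qfact_Suc ac_simps)
    also have "\<dots> = qfact n * qint (Suc k)" using qb_fact[OF assms] by simp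
    finally show ?thesis .
  qed
  have t2: "qb n (Suc k) * qfact (Suc k) * qfact (n - k) = qfact n * qint (n - k)"
  proof (cases "k < n")
    case True
    then have "n - k = Suc (n - Suc k)" by simp
    then have e: "qfact (n - k) = qfact (n - Suc k) * qint (n - k)" by (simp add: qfact_Suc)
    have "qb n (Suc k) * qfact (Suc k) * qfact (n - k) = (qb n (Suc k) * qfact (Suc k) * qfact (n - Suc k)) * qint (n - k)"
      by (simp add: e ac_simps)
    also have "\<dots> = qfact n * qint (n - k)" using qb_fact[of "Suc k" n] True by simp
    finally show ?thesis .
  next
    case False
    then show ?thesis using assms by (simp add: qb_gt)
  qed
  have qi: "qint (Suc n) = qint (n - k) + qq ^ (n - k) * qint (Suc k)"
    using qint_add[of "n - k" "Suc k"] assms by simp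
  have "(qq ^ (n - k) * qb n k + qb n (Suc k)) * qfact (Suc k) * qfact (Suc n - Suc k)
      = qq ^ (n - k) * (qb n k * qfact (Suc k) * qfact (n - k)) + qb n (Suc k) * qfact (Suc k) * qfact (n - k)"
    by (simp add: algebra_simps)
  also have "\<dots> = qq ^ (n - k) * (qfact n * qint (Suc k)) + qfact n * qint (n - k)"
    by (simp only: t1 t2)
  also have "\<dots> = qfact n * qint (Suc n)" by (simp only: qi) (simp add: algebra_simps)
  also have "\<dots> = qfact (Suc n)" by (simp add: qfact_Suc)
  finally have "qq ^ (n - k) * qb n k + qb n (Suc k) = qb (Suc n) (Suc k)"
    by (intro qb_unique) (use assms in auto)
  then show ?thesis by (rule sym)
qed

lemma qb_sym: "k \<le> n \<Longrightarrow> qb n (n - k) = qb n k"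
proof -
  assume a: "k \<le> n"
  have "qb n k * qfact (n - k) * qfact (n - (n - k)) = qfact n"
    using qb_fact[OF a] a by (simp add: algebra_simps)
  then have "qb n k = qb n (n - k)" by (rule qb_unique[rotated]) simp
  then show ?thesis by simp
qed

lemma qb_absorb:
  assumes "j < n"
  shows "qb n j * qint (n - j) = qb n (Suc j) * qint (Suc j)"
proof -
  have "n - j = Suc (n - Suc j)" using assms by simp
  then have e: "qfact (n - j) = qfact (n - Suc j) * qint (n - j)" by (simp add: qfact_Suc)
  have "(qb n j * qint (n - j)) * (qfact j * qfact (n - Suc j)) = qfact n"
    using qb_fact[of j n] assms e by (simp add: algebra_simps)
  moreover have "(qb n (Suc j) * qint (Suc j)) * (qfact j * qfact (n - Suc j)) = qfact n"
    using qb_fact[of "Suc j" n] assms by (simp add: qfact_Suc algebra_simps)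
  ultimately show ?thesis using qfact_nz by (metis mult_right_cancel no_zero_divisors)
qed

lemma qbinom_qb: "qbinom a b = qb a b"
proof (cases "b \<le> a")
  case True
  have "qfact a div (qfact b * qfact (a - b)) = (qb a b * (qfact b * qfact (a - b))) div (qfact b * qfact (a - b))"
    using qb_fact[OF True] by (simp add: mult.assoc)
  also have "\<dots> = qb a b" using qfact_nz by (simp add: nonzero_mult_div_cancel_right)
  finally show ?thesis using True by (simp add: qbinom_def)
next
  case False then show ?thesis by (simp add: qbinom_def qb_gt)
qed



lemma qb_nn[simp]: "qb n n = 1"
  by (induction n) (auto simp: qb_gt)

definition Wq :: "nat \<Rightarrow> nat \<Rightarrow> rat poly" where "Wq a b = qb (a + b) b"

lemma Wq_a0[simp]: "Wq a 0 = 1" by (simp add: Wq_def)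
lemma Wq_0b[simp]: "Wq 0 b = 1" by (simp add: Wq_def)

lemma P1: "Wq (Suc a) (Suc b) = Wq (Suc a) b + qq ^ Suc b * Wq a (Suc b)"
proof -
  have "Wq (Suc a) (Suc b) = qb (Suc (Suc a + b)) (Suc b)" by (simp add: Wq_def)
  also have "\<dots> = qb (Suc a + b) b + qq ^ Suc b * qb (Suc a + b) (Suc b)" by (rule qb.simps(3))
  finally show ?thesis by (simp add: Wq_def)
qed

lemma P2: "Wq (Suc a) (Suc b) = qq ^ Suc a * Wq (Suc a) b + Wq a (Suc b)"
proof -
  have "Wq (Suc a) (Suc b) = qb (Suc (Suc a + b)) (Suc b)" by (simp add: Wq_def)
  also have "\<dots> = qq ^ (Suc a + b - b) * qb (Suc a + b) b + qb (Suc a + b) (Suc b)"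
    by (rule qb_pascal2) simp
  finally show ?thesis by (simp add: Wq_def)
qed

lemma step_UNIV: "(UNIV::step set) = {E,D,N}" using step.exhaust by auto

lemma finite_step: "finite (UNIV::step set)" by (simp add: step_UNIV)

lemma finite_len: "finite {u::step list. length u = n}"
  using finite_lists_length_eq[OF finite_step, of n] by simp

lemma maj_snoc:
  "maj r (w @ [x]) = maj r w + (if w \<noteq> [] \<and> r (last w) > r x then length w else 0)"
proof (cases "w = []")
  case True then show ?thesis by (simp add: maj_def)
next
  case False
  let ?L = "length w"
  have L: "1 \<le> ?L" using False by (cases w) auto
  have "maj r (w @ [x]) = (\<Sum>i\<in>{1..<Suc ?L}. if r ((w@[x]) ! (i - 1)) > r ((w@[x]) ! i) then i else 0)"
    by (simp add: maj_def)
  also have "\<dots> = (\<Sum>i\<in>{1..<?L}. if r ((w@[x]) ! (i - 1)) > r ((w@[x]) ! i) then i else 0)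
     + (if r ((w@[x]) ! (?L - 1)) > r ((w@[x]) ! ?L) then ?L else 0)"
    using L by (simp add: sum.atLeastLessThan_Suc)
  also have "(\<Sum>i\<in>{1..<?L}. if r ((w@[x]) ! (i - 1)) > r ((w@[x]) ! i) then i else 0) = maj r w"
    unfolding maj_def by (rule sum.cong) (auto simp: nth_append)
  also have "(w@[x]) ! (?L - 1) = last w" using L False by (simp add: nth_append last_conv_nth)
  finally show ?thesis using False by simp
qed

lemma maj_rep[simp]: "maj r (replicate c y) = 0"
  unfolding maj_def by (rule sum.neutral) auto

lemma count_rep[simp]: "count_list (replicate c y) y = c"
  by (induction c) auto

lemma maj_nil[simp]: "maj r [] = 0" by (simp add: maj_def)

definition Sh :: "step list \<Rightarrow> nat \<Rightarrow> step list set" where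
  "Sh v c = {u. filter (\<lambda>x. x \<noteq> D) u = v \<and> count_list u D = c}"

lemma len_decomp: "length u = length (filter (\<lambda>x. x \<noteq> D) u) + count_list u D"
  by (induction u) auto

lemma Sh_len: "u \<in> Sh v c \<Longrightarrow> length u = length v + c"
  using len_decomp[of u] by (simp add: Sh_def)

lemma finite_Sh: "finite (Sh v c)"
  by (rule finite_subset[OF _ finite_len[of "length v + c"]]) (auto simp: Sh_len)

lemma Sh_nil: "Sh [] c = {replicate c D}"
proof -
  have "u \<in> Sh [] c \<longleftrightarrow> u = replicate c D" for u
  proof
    assume "u \<in> Sh [] c"
    then have a: "\<forall>y\<in>set u. y = D" and "count_list u D = c"
      by (auto simp: Sh_def filter_empty_conv)
    then have "length u = c" using len_decomp[of u] by (simp add: Sh_def \<open>u \<in> Sh [] c\<close>)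
    then show "u = replicate c D" using replicate_length_same[OF a] by simp
  next
    assume "u = replicate c D"
    then show "u \<in> Sh [] c" by (simp add: Sh_def)
  qed
  then show ?thesis by blast
qed

lemma Sh_0: "D \<notin> set v \<Longrightarrow> Sh v 0 = {v}"
proof -
  assume v: "D \<notin> set v"
  have "u \<in> Sh v 0 \<longleftrightarrow> u = v" for u
  proof
    assume "u \<in> Sh v 0"
    then have "\<forall>x\<in>set u. x \<noteq> D" "filter (\<lambda>x. x \<noteq> D) u = v" by (auto simp: Sh_def count_list_0_iff)
    then show "u = v" by simp
  next
    assume "u = v"
    moreover have "filter (\<lambda>x. x \<noteq> D) v = v" using v by (intro filter_True) auto
    ultimately show "u \<in> Sh v 0" using v
      by (auto simp: Sh_def count_list_0_iff)
  qed
  then show ?thesis by blast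
qed

lemma snoc_obtain: "u \<noteq> [] \<Longrightarrow> \<exists>w y. u = w @ [y]"
  by (rule exI[of _ "butlast u"], rule exI[of _ "last u"]) simp

lemma Sh_D: "{u\<in>Sh v (Suc c). u \<noteq> [] \<and> last u = D} = (\<lambda>u. u @ [D]) ` Sh v c"
proof (intro set_eqI iffI)
  fix u assume "u \<in> {u\<in>Sh v (Suc c). u \<noteq> [] \<and> last u = D}"
  then have u: "u \<in> Sh v (Suc c)" "u \<noteq> []" "last u = D" by auto
  then obtain w y where w: "u = w @ [y]" using snoc_obtain by blast
  then have "y = D" using u(3) by simp
  have "w \<in> Sh v c" using u(1) unfolding w \<open>y = D\<close> by (simp add: Sh_def)
  then show "u \<in> (\<lambda>u. u @ [D]) ` Sh v c" using w \<open>y = D\<close> by blast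
next
  fix u assume "u \<in> (\<lambda>u. u @ [D]) ` Sh v c"
  then show "u \<in> {u\<in>Sh v (Suc c). u \<noteq> [] \<and> last u = D}" by (auto simp: Sh_def)
qed

lemma Sh_L:
  assumes "x \<noteq> D"
  shows "{u\<in>Sh (v @ [x]) c. u \<noteq> [] \<and> last u \<noteq> D} = (\<lambda>u. u @ [x]) ` Sh v c"
proof (intro set_eqI iffI)
  fix u assume "u \<in> {u\<in>Sh (v @ [x]) c. u \<noteq> [] \<and> last u \<noteq> D}"
  then have u: "u \<in> Sh (v @ [x]) c" "u \<noteq> []" "last u \<noteq> D" by auto
  then obtain w y where w': "u = w @ [y]" using snoc_obtain by blast
  then have "y \<noteq> D" using u(3) by simp
  have "filter (\<lambda>x. x \<noteq> D) w @ [y] = v @ [x]" "count_list w D = c"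
    using u(1) \<open>y \<noteq> D\<close> unfolding w' Sh_def by auto
  then have "w \<in> Sh v c" "y = x" by (auto simp: Sh_def)
  then show "u \<in> (\<lambda>u. u @ [x]) ` Sh v c" using w' by blast
next
  fix u assume "u \<in> (\<lambda>u. u @ [x]) ` Sh v c"
  then show "u \<in> {u\<in>Sh (v @ [x]) c. u \<noteq> [] \<and> last u \<noteq> D}" using assms by (auto simp: Sh_def)
qed

lemma last_Sh:
  assumes "u \<in> Sh v c" "u \<noteq> []" "last u \<noteq> D"
  shows "last v = last u"
proof -
  obtain w y where w: "u = w @ [y]" using snoc_obtain assms(2) by blast
  then have "y \<noteq> D" using assms(3) by simp
  have "v = filter (\<lambda>x. x \<noteq> D) w @ [y]"
    using assms(1) \<open>y \<noteq> D\<close> unfolding w by (simp add: Sh_def)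
  then show ?thesis using w by simp
qed

lemma Sh_nonempty: "v \<noteq> [] \<Longrightarrow> u \<in> Sh v c \<Longrightarrow> u \<noteq> []"
  by (auto simp: Sh_def)

definition SD :: "(step \<Rightarrow> nat) \<Rightarrow> step list \<Rightarrow> nat \<Rightarrow> rat poly" where
  "SD r v c = (\<Sum>u\<in>{u\<in>Sh v c. u \<noteq> [] \<and> last u = D}. qq ^ maj r u)"
definition SL :: "(step \<Rightarrow> nat) \<Rightarrow> step list \<Rightarrow> nat \<Rightarrow> rat poly" where
  "SL r v c = (\<Sum>u\<in>{u\<in>Sh v c. u \<noteq> [] \<and> last u \<noteq> D}. qq ^ maj r u)"

lemma Sh_split:
  assumes "v \<noteq> []"
  shows "(\<Sum>u\<in>Sh v c. g u) = (\<Sum>u\<in>{u\<in>Sh v c. u \<noteq> [] \<and> last u = D}. g u) + (\<Sum>u\<in>{u\<in>Sh v c. u \<noteq> [] \<and> last u \<noteq> D}. g u)"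
proof -
  let ?A = "{u\<in>Sh v c. u \<noteq> [] \<and> last u = D}" and ?B = "{u\<in>Sh v c. u \<noteq> [] \<and> last u \<noteq> D}"
  have "sum g (?A \<union> ?B) = sum g ?A + sum g ?B"
    by (rule sum.union_disjoint) (auto intro: finite_subset[OF _ finite_Sh])
  moreover have "?A \<union> ?B = Sh v c" using Sh_nonempty[OF assms] by auto
  ultimately show ?thesis by simp
qed

lemma Sh_snoc_sum:
  assumes "v \<noteq> []"
  shows "(\<Sum>u\<in>Sh v c. qq ^ maj r (u @ [x])) =
    SD r v c * qq ^ (if r D > r x then length v + c else 0) + SL r v c * qq ^ (if r (last v) > r x then length v + c else 0)"
proof -
  have "(\<Sum>u\<in>{u\<in>Sh v c. u \<noteq> [] \<and> last u = D}. qq ^ maj r (u @ [x]))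
     = (\<Sum>u\<in>{u\<in>Sh v c. u \<noteq> [] \<and> last u = D}. qq ^ maj r u * qq ^ (if r D > r x then length v + c else 0))"
    by (rule sum.cong) (auto simp: maj_snoc Sh_len power_add)
  moreover have "(\<Sum>u\<in>{u\<in>Sh v c. u \<noteq> [] \<and> last u \<noteq> D}. qq ^ maj r (u @ [x]))
     = (\<Sum>u\<in>{u\<in>Sh v c. u \<noteq> [] \<and> last u \<noteq> D}. qq ^ maj r u * qq ^ (if r (last v) > r x then length v + c else 0))"
    by (rule sum.cong) (auto simp: maj_snoc Sh_len power_add last_Sh)
  ultimately show ?thesis
    by (simp add: Sh_split[OF assms] SD_def SL_def sum_distrib_right)
qed



lemma maj_single: "maj r [x] = 0" by (simp add: maj_def)

lemma SD_snoc: "SD r v (Suc c) = (\<Sum>u\<in>Sh v c. qq ^ maj r (u @ [D]))"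
proof -
  have "SD r v (Suc c) = sum (\<lambda>u. qq ^ maj r u) ((\<lambda>u. u @ [D]) ` Sh v c)"
    by (simp add: SD_def Sh_D)
  also have "\<dots> = (\<Sum>u\<in>Sh v c. qq ^ maj r (u @ [D]))"
    by (subst sum.reindex) (auto simp: inj_on_def)
  finally show ?thesis .
qed

lemma SL_snoc: "x \<noteq> D \<Longrightarrow> SL r (v @ [x]) c = (\<Sum>u\<in>Sh v c. qq ^ maj r (u @ [x]))"
proof -
  assume x: "x \<noteq> D"
  have "SL r (v @ [x]) c = sum (\<lambda>u. qq ^ maj r u) ((\<lambda>u. u @ [x]) ` Sh v c)"
    by (simp add: SL_def Sh_L[OF x])
  also have "\<dots> = (\<Sum>u\<in>Sh v c. qq ^ maj r (u @ [x]))"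
    by (subst sum.reindex) (auto simp: inj_on_def)
  finally show ?thesis .
qed

lemma sh_main:
  assumes "inj r"
  shows "\<forall>v. v \<noteq> [] \<longrightarrow> D \<notin> set v \<longrightarrow>
    SD r v c = (if c = 0 then 0 else qq ^ maj r v * (if r (last v) > r D then qq ^ length v * Wq (length v) (c - 1) else Wq (length v) (c - 1)))
    \<and> SL r v c = qq ^ maj r v * (if r (last v) > r D then Wq (length v - 1) c else qq ^ c * Wq (length v - 1) c)"
proof (induction c)
  case 0
  show ?case
  proof (intro allI impI)
    fix v :: "step list" assume v: "v \<noteq> []" "D \<notin> set v"
    then have "last v \<noteq> D" using last_in_set by metis
    then have s1: "{u\<in>Sh v 0. u \<noteq> [] \<and> last u = D} = {}" and s2: "{u\<in>Sh v 0. u \<noteq> [] \<and> last u \<noteq> D} = {v}"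
      using v by (auto simp: Sh_0)
    have "SD r v 0 = 0" unfolding SD_def s1 by simp
    moreover have "SL r v 0 = qq ^ maj r v" unfolding SL_def s2 by simp
    ultimately show "SD r v 0 = (if 0 = (0::nat) then 0 else qq ^ maj r v * (if r (last v) > r D then qq ^ length v * Wq (length v) (0 - 1) else Wq (length v) (0 - 1)))
    \<and> SL r v 0 = qq ^ maj r v * (if r (last v) > r D then Wq (length v - 1) 0 else qq ^ 0 * Wq (length v - 1) 0)"
      by simp
  qed
next
  case (Suc c)
  have SDs: "SD r v (Suc c) = qq ^ maj r v * (if r (last v) > r D then qq ^ length v * Wq (length v) c else Wq (length v) c)"
    if v: "v \<noteq> []" "D \<notin> set v" for v
  proof -
    obtain p where p: "length v = Suc p" using v by (cases v) auto
    have IH: "SD r v c = (if c = 0 then 0 else qq ^ maj r v * (if r (last v) > r D then qq ^ length v * Wq (length v) (c - 1) else Wq (length v) (c - 1)))"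
      "SL r v c = qq ^ maj r v * (if r (last v) > r D then Wq (length v - 1) c else qq ^ c * Wq (length v - 1) c)"
      using Suc.IH v by auto
    have "SD r v (Suc c) = SD r v c + SL r v c * qq ^ (if r (last v) > r D then length v + c else 0)"
      using Sh_snoc_sum[OF v(1), where c=c and r=r and x=D] by (simp add: SD_snoc)
    also have "\<dots> = qq ^ maj r v * (if r (last v) > r D then qq ^ length v * Wq (length v) c else Wq (length v) c)"
    proof (cases c)
      case 0
      then show ?thesis using IH p by (simp add: power_add)
    next
      case (Suc c')
      then show ?thesis using IH p P1[of p c'] by (simp add: power_add algebra_simps)
    qed
    finally show ?thesis .
  qed
  have SLs: "v \<noteq> [] \<longrightarrow> D \<notin> set v \<longrightarrow> SL r v (Suc c) = qq ^ maj r v * (if r (last v) > r D then Wq (length v - 1) (Suc c) else qq ^ Suc c * Wq (length v - 1) (Suc c))" for v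
  proof (induction v rule: rev_induct)
    case Nil then show ?case by simp
  next
    case (snoc x v')
    show ?case
    proof (intro impI)
      assume "v' @ [x] \<noteq> []" "D \<notin> set (v' @ [x])"
      then have x: "x \<noteq> D" and v'D: "D \<notin> set v'" by auto
      have rx: "r x \<noteq> r D" using x assms by (simp add: inj_eq)
      show "SL r (v' @ [x]) (Suc c) = qq ^ maj r (v' @ [x]) * (if r (last (v' @ [x])) > r D then Wq (length (v' @ [x]) - 1) (Suc c) else qq ^ Suc c * Wq (length (v' @ [x]) - 1) (Suc c))"
      proof (cases "v' = []")
        case True
        have "SL r ([] @ [x]) (Suc c) = (\<Sum>u\<in>Sh [] (Suc c). qq ^ maj r (u @ [x]))"
          by (rule SL_snoc[OF x])
        moreover have "maj r (replicate (Suc c) D @ [x]) = (if r D > r x then Suc c else 0)"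
          by (subst maj_snoc) (simp del: replicate_Suc)
        ultimately show ?thesis using rx True by (simp add: Sh_nil maj_single)
      next
        case False
        obtain p where p: "length v' = Suc p" using False by (cases v') auto
        have IH: "SL r v' (Suc c) = qq ^ maj r v' * (if r (last v') > r D then Wq (length v' - 1) (Suc c) else qq ^ Suc c * Wq (length v' - 1) (Suc c))"
          using snoc.IH False v'D by simp
        have e: "SL r (v' @ [x]) (Suc c) = SD r v' (Suc c) * qq ^ (if r D > r x then length v' + Suc c else 0)
           + SL r v' (Suc c) * qq ^ (if r (last v') > r x then length v' + Suc c else 0)"
          using Sh_snoc_sum[OF False, where c="Suc c" and r=r and x=x] by (simp add: SL_snoc[OF x])
        show ?thesis
          unfolding e IH SDs[OF False v'D] using p rx
          apply (cases "r x > r D"; cases "r (last v') > r D"; cases "r (last v') > r x")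
          apply (simp_all add: maj_snoc False power_add algebra_simps)
          apply ((simp add: P1[of p c] algebra_simps; fail) | (simp add: P2[of p c] algebra_simps; fail))+
          done
      qed
    qed
  qed
  show ?case using SDs SLs by auto
qed

lemma sh_total:
  assumes "inj r" "D \<notin> set v"
  shows "(\<Sum>u\<in>Sh v c. qq ^ maj r u) = qq ^ maj r v * Wq (length v) c"
proof (cases "v = []")
  case True then show ?thesis by (simp add: Sh_nil)
next
  case False
  obtain p where p: "length v = Suc p" using False by (cases v) auto
  have m: "SD r v c = (if c = 0 then 0 else qq ^ maj r v * (if r (last v) > r D then qq ^ length v * Wq (length v) (c - 1) else Wq (length v) (c - 1)))"
    "SL r v c = qq ^ maj r v * (if r (last v) > r D then Wq (length v - 1) c else qq ^ c * Wq (length v - 1) c)"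
    using sh_main[OF assms(1), of c] False assms(2) by auto
  have "(\<Sum>u\<in>Sh v c. qq ^ maj r u) = SD r v c + SL r v c"
    using Sh_split[OF False] by (simp add: SD_def SL_def)
  also have "\<dots> = qq ^ maj r v * Wq (length v) c"
  proof (cases c)
    case 0 then show ?thesis using m p by simp
  next
    case (Suc c')
    then show ?thesis using m p
      by (cases "r D < r (last v)"; ((simp add: P1[of p c'] algebra_simps; fail) | (simp add: P2[of p c'] algebra_simps; fail)))
  qed
  finally show ?thesis .
qed



definition bal :: "step list \<Rightarrow> bool" where
  "bal w = (\<forall>k \<le> length w. count_list (take k w) N \<le> count_list (take k w) E)"

lemma bal_nil[simp]: "bal []" by (simp add: bal_def)

lemma bal_snoc: "bal (w @ [x]) \<longleftrightarrow> bal w \<and> count_list (w @ [x]) N \<le> count_list (w @ [x]) E"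
proof
  assume b: "bal (w @ [x])"
  have "bal w" unfolding bal_def
  proof (intro allI impI)
    fix k assume "k \<le> length w"
    then have "take k (w @ [x]) = take k w" by simp
    then show "count_list (take k w) N \<le> count_list (take k w) E"
      using b \<open>k \<le> length w\<close> unfolding bal_def by (metis le_SucI length_append_singleton)
  qed
  moreover have "count_list (w @ [x]) N \<le> count_list (w @ [x]) E"
    using b unfolding bal_def by (metis order_refl take_all)
  ultimately show "bal w \<and> count_list (w @ [x]) N \<le> count_list (w @ [x]) E" by simp
next
  assume a: "bal w \<and> count_list (w @ [x]) N \<le> count_list (w @ [x]) E"
  show "bal (w @ [x])" unfolding bal_def
  proof (intro allI impI)
    fix k assume k: "k \<le> length (w @ [x])"
    show "count_list (take k (w @ [x])) N \<le> count_list (take k (w @ [x])) E"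
    proof (cases "k \<le> length w")
      case True
      then show ?thesis using a unfolding bal_def by simp
    next
      case False
      then have "take k (w @ [x]) = w @ [x]" using k by simp
      then show ?thesis using a by simp
    qed
  qed
qed

lemma len3: "length w = count_list w E + count_list w N + count_list w D"
proof (induction w)
  case Nil then show ?case by simp
next
  case (Cons x w) then show ?case by (cases x) auto
qed

definition Bal :: "nat \<Rightarrow> nat \<Rightarrow> step list set" where
  "Bal a b = {w. D \<notin> set w \<and> count_list w E = a \<and> count_list w N = b \<and> bal w}"

lemma Bal_len: "w \<in> Bal a b \<Longrightarrow> length w = a + b"
  using len3[of w] by (simp add: Bal_def count_list_0_iff)

lemma finite_Bal: "finite (Bal a b)"
  by (rule finite_subset[OF _ finite_len[of "a + b"]]) (auto simp: Bal_len)

lemma Bal_00: "Bal 0 0 = {[]}"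
  using Bal_len by (fastforce simp: Bal_def)

lemma Bal_a0: "Bal a 0 = {replicate a E}"
proof -
  have "w \<in> Bal a 0 \<longleftrightarrow> w = replicate a E" for w
  proof
    assume w: "w \<in> Bal a 0"
    have "\<forall>y\<in>set w. y = E"
    proof
      fix y assume "y \<in> set w"
      moreover have "D \<notin> set w" "N \<notin> set w" using w by (auto simp: Bal_def count_list_0_iff)
      ultimately have "y \<noteq> D" "y \<noteq> N" by auto
      then show "y = E" by (cases y) auto
    qed
    moreover have "length w = a" using Bal_len[OF w] by simp
    ultimately show "w = replicate a E" using replicate_length_same by metis
  next
    assume w: "w = replicate a E"
    have "bal w" unfolding bal_def w
    proof (intro allI impI)
      fix k assume "k \<le> length (replicate a E)"
      have "N \<notin> set (take k (replicate a E))" by (auto dest: in_set_takeD)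
      then show "count_list (take k (replicate a E)) N \<le> count_list (take k (replicate a E)) E" by simp
    qed
    then show "w \<in> Bal a 0" using w by (auto simp: Bal_def)
  qed
  then show ?thesis by blast
qed

lemma Bal_le: "w \<in> Bal a b \<Longrightarrow> b \<le> a"
  unfolding Bal_def bal_def by (metis (mono_tags, lifting) mem_Collect_eq order_refl take_all)

lemma Bal_empty: "a < b \<Longrightarrow> Bal a b = {}"
  using Bal_le by fastforce

lemma Bal_E: "{w\<in>Bal (Suc a) b. w \<noteq> [] \<and> last w = E} = (\<lambda>w. w @ [E]) ` Bal a b"
proof (intro set_eqI iffI)
  fix u assume "u \<in> {w\<in>Bal (Suc a) b. w \<noteq> [] \<and> last w = E}"
  then have u: "u \<in> Bal (Suc a) b" "u \<noteq> []" "last u = E" by auto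
  then obtain w y where w: "u = w @ [y]" using snoc_obtain by blast
  then have "y = E" using u(3) by simp
  have "w \<in> Bal a b" using u(1) unfolding w \<open>y = E\<close> by (simp add: Bal_def bal_snoc)
  then show "u \<in> (\<lambda>w. w @ [E]) ` Bal a b" using w \<open>y = E\<close> by blast
next
  fix u assume "u \<in> (\<lambda>w. w @ [E]) ` Bal a b"
  then obtain w where w: "w \<in> Bal a b" "u = w @ [E]" by blast
  have "b \<le> a" using Bal_le[OF w(1)] .
  then show "u \<in> {w\<in>Bal (Suc a) b. w \<noteq> [] \<and> last w = E}" using w by (auto simp: Bal_def bal_snoc)
qed

lemma Bal_N: "Suc b \<le> a \<Longrightarrow> {w\<in>Bal a (Suc b). w \<noteq> [] \<and> last w = N} = (\<lambda>w. w @ [N]) ` Bal a b"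
proof (intro set_eqI iffI)
  fix u assume "u \<in> {w\<in>Bal a (Suc b). w \<noteq> [] \<and> last w = N}"
  then have u: "u \<in> Bal a (Suc b)" "u \<noteq> []" "last u = N" by auto
  then obtain w y where w: "u = w @ [y]" using snoc_obtain by blast
  then have "y = N" using u(3) by simp
  have "w \<in> Bal a b" using u(1) unfolding w \<open>y = N\<close> by (simp add: Bal_def bal_snoc)
  then show "u \<in> (\<lambda>w. w @ [N]) ` Bal a b" using w \<open>y = N\<close> by blast
next
  assume ba: "Suc b \<le> a"
  fix u assume "u \<in> (\<lambda>w. w @ [N]) ` Bal a b"
  then obtain w where w: "w \<in> Bal a b" "u = w @ [N]" by blast
  then show "u \<in> {w\<in>Bal a (Suc b). w \<noteq> [] \<and> last w = N}" using ba by (auto simp: Bal_def bal_snoc)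
qed

definition BS :: "(step \<Rightarrow> nat) \<Rightarrow> nat \<Rightarrow> nat \<Rightarrow> rat poly" where
  "BS r a b = (\<Sum>w\<in>Bal a b. qq ^ maj r w)"
definition BX :: "(step \<Rightarrow> nat) \<Rightarrow> step \<Rightarrow> nat \<Rightarrow> nat \<Rightarrow> rat poly" where
  "BX r x a b = (\<Sum>w\<in>{w\<in>Bal a b. w \<noteq> [] \<and> last w = x}. qq ^ maj r w)"

lemma Bal_split:
  assumes "a + b > 0"
  shows "(\<Sum>w\<in>Bal a b. g w) = (\<Sum>w\<in>{w\<in>Bal a b. w \<noteq> [] \<and> last w = E}. g w) + (\<Sum>w\<in>{w\<in>Bal a b. w \<noteq> [] \<and> last w = N}. g w)"
proof -
  let ?A = "{w\<in>Bal a b. w \<noteq> [] \<and> last w = E}" and ?B = "{w\<in>Bal a b. w \<noteq> [] \<and> last w = N}"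
  have "sum g (?A \<union> ?B) = sum g ?A + sum g ?B"
    by (rule sum.union_disjoint) (auto intro: finite_subset[OF _ finite_Bal])
  moreover have "?A \<union> ?B = Bal a b"
  proof (intro set_eqI iffI)
    fix w assume w: "w \<in> Bal a b"
    then have "w \<noteq> []" using Bal_len[OF w] assms by auto
    then have "last w \<in> set w" by simp
    then have "last w \<noteq> D" using w by (auto simp: Bal_def)
    then show "w \<in> ?A \<union> ?B" using w \<open>w \<noteq> []\<close> by (cases "last w") auto
  qed auto
  ultimately show ?thesis by simp
qed

lemma BS_split: "a + b > 0 \<Longrightarrow> BS r a b = BX r E a b + BX r N a b"
  unfolding BS_def BX_def by (rule Bal_split)

lemma Bal_snoc_sum:
  "(\<Sum>w\<in>Bal a b. qq ^ maj r (w @ [x])) = (if a = 0 \<and> b = 0 then 1 else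
     BX r E a b * qq ^ (if r E > r x then a + b else 0) + BX r N a b * qq ^ (if r N > r x then a + b else 0))"
proof (cases "a = 0 \<and> b = 0")
  case True then show ?thesis by (simp add: Bal_00 maj_single)
next
  case False
  then have ab: "a + b > 0" by simp
  have "(\<Sum>w\<in>{w\<in>Bal a b. w \<noteq> [] \<and> last w = E}. qq ^ maj r (w @ [x]))
     = (\<Sum>w\<in>{w\<in>Bal a b. w \<noteq> [] \<and> last w = E}. qq ^ maj r w * qq ^ (if r E > r x then a + b else 0))"
    by (rule sum.cong) (auto simp: maj_snoc Bal_len power_add)
  moreover have "(\<Sum>w\<in>{w\<in>Bal a b. w \<noteq> [] \<and> last w = N}. qq ^ maj r (w @ [x]))
     = (\<Sum>w\<in>{w\<in>Bal a b. w \<noteq> [] \<and> last w = N}. qq ^ maj r w * qq ^ (if r N > r x then a + b else 0))"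
    by (rule sum.cong) (auto simp: maj_snoc Bal_len power_add)
  ultimately have "(\<Sum>w\<in>Bal a b. qq ^ maj r (w @ [x])) =
     BX r E a b * qq ^ (if r E > r x then a + b else 0) + BX r N a b * qq ^ (if r N > r x then a + b else 0)"
    by (simp add: Bal_split[OF ab] BX_def sum_distrib_right)
  then show ?thesis by (subst if_not_P[OF False])
qed

lemma BX_E: "BX r E (Suc a) b = (\<Sum>w\<in>Bal a b. qq ^ maj r (w @ [E]))"
proof -
  have "BX r E (Suc a) b = sum (\<lambda>w. qq ^ maj r w) ((\<lambda>w. w @ [E]) ` Bal a b)"
    by (simp add: BX_def Bal_E)
  also have "\<dots> = (\<Sum>w\<in>Bal a b. qq ^ maj r (w @ [E]))"
    by (subst sum.reindex) (auto simp: inj_on_def)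
  finally show ?thesis .
qed

lemma BX_N: "Suc b \<le> a \<Longrightarrow> BX r N a (Suc b) = (\<Sum>w\<in>Bal a b. qq ^ maj r (w @ [N]))"
proof -
  assume ba: "Suc b \<le> a"
  have "BX r N a (Suc b) = sum (\<lambda>w. qq ^ maj r w) ((\<lambda>w. w @ [N]) ` Bal a b)"
    by (simp add: BX_def Bal_N[OF ba])
  also have "\<dots> = (\<Sum>w\<in>Bal a b. qq ^ maj r (w @ [N]))"
    by (subst sum.reindex) (auto simp: inj_on_def)
  finally show ?thesis .
qed

lemma BS_a0: "BS r a 0 = 1"
  by (simp add: BS_def Bal_a0)

lemma BS_empty: "a < b \<Longrightarrow> BS r a b = 0"
  by (simp add: BS_def Bal_empty)

lemma BX_empty: "a < b \<Longrightarrow> BX r x a b = 0"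
  by (simp add: BX_def Bal_empty)



lemma BS_pos: "a + b > 0 \<Longrightarrow> BX r E a b + BX r N a b = BS r a b"
  by (simp add: BS_split)

lemma snoc_noDesc:
  assumes "\<not> r E > r x" "\<not> r N > r x"
  shows "(\<Sum>w\<in>Bal a b. qq ^ maj r (w @ [x])) = BS r a b"
proof (cases "a = 0 \<and> b = 0")
  case True then show ?thesis by (simp add: BS_def Bal_00 maj_single)
next
  case False
  then have pos: "a + b > 0" by simp
  show ?thesis using assms by (subst Bal_snoc_sum, subst if_not_P[OF False]) (simp add: BS_split[OF pos])
qed

lemma recEN:
  assumes "r E < r N" "b < a"
  shows "BS r (Suc a) (Suc b) = BS r a (Suc b) - BS r a b + qq ^ (a + b + 1) * BS r a b + BS r (Suc a) b"
proof -
  have 1: "BS r (Suc a) (Suc b) = BX r E (Suc a) (Suc b) + BX r N (Suc a) (Suc b)" by (rule BS_split) simp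
  have 2: "BX r E (Suc a) (Suc b) = BX r E a (Suc b) + BX r N a (Suc b) * qq ^ (a + Suc b)"
    using BX_E[of r a "Suc b"] Bal_snoc_sum[where a=a and b="Suc b" and r=r and x=E] assms(1) by simp
  have 3: "BX r N (Suc a) (Suc b) = BS r (Suc a) b"
    using BX_N[of b "Suc a" r] snoc_noDesc[where r=r and x=N and a="Suc a" and b=b] assms by simp
  have 4: "BX r N a (Suc b) = BS r a b"
    using BX_N[of b a r] snoc_noDesc[where r=r and x=N and a=a and b=b] assms by simp
  have 5: "BX r E a (Suc b) = BS r a (Suc b) - BS r a b"
    using BS_split[of a "Suc b" r] 4 by simp
  show ?thesis unfolding 1 2 3 4 5 by (simp add: algebra_simps)
qed

lemma bdEN:
  assumes "r E < r N"
  shows "BS r (Suc a) (Suc a) = BS r (Suc a) a"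
proof -
  have 1: "BS r (Suc a) (Suc a) = BX r E (Suc a) (Suc a) + BX r N (Suc a) (Suc a)" by (rule BS_split) simp
  have 2: "BX r E (Suc a) (Suc a) = 0"
    using BX_E[of r a "Suc a"] by (simp add: Bal_empty)
  have 3: "BX r N (Suc a) (Suc a) = BS r (Suc a) a"
    using BX_N[of a "Suc a" r] snoc_noDesc[where r=r and x=N and a="Suc a" and b=a] assms by simp
  show ?thesis unfolding 1 2 3 by simp
qed

lemma recNE:
  assumes "r N < r E" "b \<le> a"
  shows "BS r (Suc a) (Suc b) = BS r a (Suc b) - BS r a b + qq ^ (a + b + 1) * BS r a b + BS r (Suc a) b"
proof -
  have 1: "BS r (Suc a) (Suc b) = BX r E (Suc a) (Suc b) + BX r N (Suc a) (Suc b)" by (rule BS_split) simp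
  have 2: "BX r E (Suc a) (Suc b) = BS r a (Suc b)"
    using BX_E[of r a "Suc b"] snoc_noDesc[where r=r and x=E and a=a and b="Suc b"] assms by simp
  have 3: "BX r N (Suc a) (Suc b) = BX r E (Suc a) b * qq ^ (Suc a + b) + BX r N (Suc a) b"
    using BX_N[of b "Suc a" r] Bal_snoc_sum[where a="Suc a" and b=b and r=r and x=N] assms by simp
  have 4: "BX r E (Suc a) b = BS r a b"
    using BX_E[of r a b] snoc_noDesc[where r=r and x=E and a=a and b=b] assms by simp
  have 5: "BX r N (Suc a) b = BS r (Suc a) b - BS r a b"
    using BS_split[of "Suc a" b r] 4 by simp
  show ?thesis unfolding 1 2 3 4 5 by (simp add: algebra_simps)
qed

definition Wp :: "nat \<Rightarrow> nat \<Rightarrow> rat poly" where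
  "Wp a b = (if b = 0 then 0 else Wq (Suc a) (b - 1))"

lemma RW: "Wq (Suc a) (Suc b) = Wq a (Suc b) - Wq a b + qq ^ (a + b + 1) * Wq a b + Wq (Suc a) b"
proof (cases a)
  case 0
  then show ?thesis using P1[of 0 b] by (simp add: algebra_simps)
next
  case (Suc a')
  define Y where "Y = Wq (Suc a') (Suc b)"
  define Z where "Z = Wq (Suc a') b"
  define V where "V = Wq a' (Suc b)"
  have h1: "Y = Z + qq ^ Suc b * V" unfolding Y_def Z_def V_def by (rule P1)
  have h2: "Y = qq ^ Suc a' * Z + V" unfolding Y_def Z_def V_def by (rule P2)
  have "qq ^ Suc b * Y = qq ^ Suc b * (qq ^ Suc a' * Z + V)" using h2 by simp
  also have "\<dots> = qq ^ (a' + b + 2) * Z + qq ^ Suc b * V" by (simp add: algebra_simps power_add)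
  finally have h3: "qq ^ Suc b * Y = qq ^ (a' + b + 2) * Z + qq ^ Suc b * V" .
  have "Wq (Suc a) (Suc b) = Wq (Suc a) b + qq ^ Suc b * Y"
    unfolding Y_def Suc by (rule P1)
  also have "qq ^ Suc b * Y = Y - Z + qq ^ (a' + b + 2) * Z"
    using h1 h3 by (simp add: algebra_simps)
  finally show ?thesis unfolding Y_def Z_def Suc by (simp add: algebra_simps)
qed

lemma RWp: "Wp (Suc a) (Suc b) = Wp a (Suc b) - Wp a b + qq ^ (a + b + 1) * Wp a b + Wp (Suc a) b"
proof (cases b)
  case 0 then show ?thesis by (simp add: Wp_def)
next
  case (Suc b')
  then show ?thesis using RW[of "Suc a" b'] by (simp add: Wp_def)
qed

lemma Wsym: "Wq a (Suc a) = Wq (Suc a) a"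
proof -
  have "qb (Suc (a + a)) (Suc (a + a) - a) = qb (Suc (a + a)) a" by (rule qb_sym) simp
  moreover have "Suc (a + a) - a = Suc a" by simp
  ultimately show ?thesis by (simp add: Wq_def)
qed

definition Fc :: "nat \<Rightarrow> nat \<Rightarrow> rat poly" where "Fc a b = Wq a b - qq * Wp a b"
definition Gc :: "nat \<Rightarrow> nat \<Rightarrow> rat poly" where "Gc a b = Wq a b - Wp a b"

lemma RF: "Fc (Suc a) (Suc b) = Fc a (Suc b) - Fc a b + qq ^ (a + b + 1) * Fc a b + Fc (Suc a) b"
  unfolding Fc_def RW[of a b] RWp[of a b] by (simp add: algebra_simps)

lemma RG: "Gc (Suc a) (Suc b) = Gc a (Suc b) - Gc a b + qq ^ (a + b + 1) * Gc a b + Gc (Suc a) b"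
  unfolding Gc_def RW[of a b] RWp[of a b] by (simp add: algebra_simps)

lemma Fc_bd: "Fc (Suc a) (Suc a) = Fc (Suc a) a"
proof (cases a)
  case 0
  then show ?thesis using P1[of 0 0] by (simp add: Fc_def Wp_def)
next
  case (Suc c)
  have e1: "Wq (Suc a) (Suc a) = Wq (Suc a) a + qq ^ Suc a * Wq a (Suc a)" by (rule P1)
  have e2: "Wq (Suc (Suc a)) (Suc c) = Wq (Suc (Suc a)) c + qq ^ Suc c * Wq (Suc a) (Suc c)" by (rule P1)
  show ?thesis unfolding Fc_def Wp_def using e1 e2 Wsym[of a] Suc by (simp add: algebra_simps)
qed

lemma Gc_bd: "Gc a (Suc a) = 0"
  by (simp add: Gc_def Wp_def Wsym)

lemma BS_EN: "r E < r N \<Longrightarrow> b \<le> a \<Longrightarrow> BS r a b = Fc a b"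
proof (induction b arbitrary: a)
  case 0 then show ?case by (simp add: BS_a0 Fc_def Wp_def)
next
  case (Suc b)
  have EN: "r E < r N" using Suc.prems(1) .
  have IHo: "\<And>a. b \<le> a \<Longrightarrow> BS r a b = Fc a b" using Suc.IH EN by blast
  show ?case using Suc.prems(2)
  proof (induction a)
    case 0 then show ?case by simp
  next
    case (Suc a)
    show ?case
    proof (cases "b = a")
      case True
      then show ?thesis using bdEN[OF EN] IHo[of "Suc a"] Fc_bd by simp
    next
      case False
      then have ba: "b < a" using Suc.prems by simp
      show ?thesis using recEN[OF EN ba] IHo Suc.IH ba RF[of a b]
        by simp
    qed
  qed
qed

lemma BS_NE: "r N < r E \<Longrightarrow> b \<le> a \<Longrightarrow> BS r a b = Gc a b"
proof (induction b arbitrary: a)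
  case 0 then show ?case by (simp add: BS_a0 Gc_def Wp_def)
next
  case (Suc b)
  have EN: "r N < r E" using Suc.prems(1) .
  have IHo: "\<And>a. b \<le> a \<Longrightarrow> BS r a b = Gc a b" using Suc.IH EN by blast
  show ?case using Suc.prems(2)
  proof (induction a)
    case 0 then show ?case by simp
  next
    case (Suc a)
    then have ba: "b \<le> a" by simp
    have i: "BS r a (Suc b) = Gc a (Suc b)"
    proof (cases "b = a")
      case True then show ?thesis using BS_empty[of a "Suc a" r] Gc_bd by simp
    next
      case False then show ?thesis using Suc.IH ba by simp
    qed
    show ?case using recNE[OF EN ba] IHo i ba RG[of a b]
      by simp
  qed
qed



lemma count_filter: "y \<noteq> D \<Longrightarrow> count_list (filter (\<lambda>x. x \<noteq> D) u) y = count_list u y"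
  by (induction u) auto

lemma bal_filter: "bal (filter (\<lambda>x. x \<noteq> D) u) \<longleftrightarrow> bal u"
proof (induction u rule: rev_induct)
  case Nil then show ?case by simp
next
  case (snoc x u)
  have bu: "bal u \<Longrightarrow> count_list u N \<le> count_list u E"
    unfolding bal_def by (metis order_refl take_all)
  show ?case
  proof (cases "x = D")
    case True
    then show ?thesis using snoc bu by (auto simp: bal_snoc)
  next
    case False
    then show ?thesis using snoc by (simp add: bal_snoc count_filter)
  qed
qed

lemma Sch_alt: "Sch_L n l = {u. length u = l \<and> count_list u E + count_list u D = n \<and> count_list u N + count_list u D = n \<and> bal u}"
  unfolding Sch_L_def Del_def bal_def xcoord_def ycoord_def by auto

lemma sch_sum:
  assumes "inj r" "n \<le> l" "l \<le> 2 * n"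
  shows "(\<Sum>u\<in>Sch_L n l. qq ^ maj r u) = qb l (2 * n - l) * BS r (l - n) (l - n)"
proof -
  define k where "k = l - n"
  define d where "d = 2 * n - l"
  have fin: "finite (Sch_L n l)"
    by (rule finite_subset[OF _ finite_len[of l]]) (auto simp: Sch_alt)
  have cnt: "count_list u E = k \<and> count_list u N = k \<and> count_list u D = d" if "u \<in> Sch_L n l" for u
    using that len3[of u] assms unfolding Sch_alt k_def d_def by auto
  have img: "(\<lambda>u. filter (\<lambda>x. x \<noteq> D) u) ` Sch_L n l \<subseteq> Bal k k"
  proof
    fix v assume "v \<in> (\<lambda>u. filter (\<lambda>x. x \<noteq> D) u) ` Sch_L n l"
    then obtain u where u: "u \<in> Sch_L n l" "v = filter (\<lambda>x. x \<noteq> D) u" by blast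
    show "v \<in> Bal k k" using u cnt[OF u(1)] by (auto simp: Bal_def count_filter bal_filter Sch_alt)
  qed
  have fib: "{u \<in> Sch_L n l. filter (\<lambda>x. x \<noteq> D) u = v} = Sh v d" if v: "v \<in> Bal k k" for v
  proof (intro set_eqI iffI)
    fix u assume "u \<in> {u \<in> Sch_L n l. filter (\<lambda>x. x \<noteq> D) u = v}"
    then show "u \<in> Sh v d" using cnt by (auto simp: Sh_def)
  next
    fix u assume u: "u \<in> Sh v d"
    have fu: "filter (\<lambda>x. x \<noteq> D) u = v" "count_list u D = d" using u by (auto simp: Sh_def)
    have "count_list u E = k" "count_list u N = k" "bal u"
      using v fu count_filter[of E u] count_filter[of N u] bal_filter[of u] by (auto simp: Bal_def)
    moreover have "length u = l" using Sh_len[OF u] Bal_len[OF v] assms unfolding k_def d_def by simp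
    ultimately show "u \<in> {u \<in> Sch_L n l. filter (\<lambda>x. x \<noteq> D) u = v}"
      using fu assms unfolding Sch_alt k_def d_def by auto
  qed
  have "(\<Sum>u\<in>Sch_L n l. qq ^ maj r u) = (\<Sum>v\<in>Bal k k. \<Sum>u\<in>{u \<in> Sch_L n l. filter (\<lambda>x. x \<noteq> D) u = v}. qq ^ maj r u)"
    by (rule sum.group[OF fin finite_Bal img, symmetric])
  also have "\<dots> = (\<Sum>v\<in>Bal k k. qq ^ maj r v * Wq (k + k) d)"
  proof (rule sum.cong[OF refl])
    fix v assume v: "v \<in> Bal k k"
    have "D \<notin> set v" using v by (simp add: Bal_def)
    then show "(\<Sum>u\<in>{u \<in> Sch_L n l. filter (\<lambda>x. x \<noteq> D) u = v}. qq ^ maj r u) = qq ^ maj r v * Wq (k + k) d"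
      using sh_total[OF assms(1)] fib[OF v] Bal_len[OF v] by simp
  qed
  also have "\<dots> = Wq (k + k) d * BS r k k" by (simp add: BS_def sum_distrib_left mult.commute)
  also have "Wq (k + k) d = qb l (2 * n - l)" using assms unfolding Wq_def k_def d_def
    by (simp add: algebra_simps)
  finally show ?thesis unfolding k_def .
qed

lemma qint_1: "qint 1 = 1" by (simp add: qint_alt)

lemma qint_Suc0: "qint (Suc 0) = 1" by (simp add: qint_alt)

lemma cat_rel:
  "Fc k k * qint (Suc k) = qb (2 * k) k \<and> Gc k k * qint (Suc k) = qq ^ k * qb (2 * k) k"
proof (cases k)
  case 0 then show ?thesis by (simp add: Fc_def Gc_def Wp_def qint_Suc0)
next
  case (Suc j)
  have a: "qb (2 * k) j * qint (Suc k) = qb (2 * k) k * qint k"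
    using qb_absorb[of j "2 * k"] Suc by (simp add: numeral_2_eq_2)
  have w: "Wp k k = qb (2 * k) j" "Wq k k = qb (2 * k) k"
    using Suc by (simp_all add: Wp_def Wq_def numeral_2_eq_2)
  have q1: "qint (Suc k) = 1 + qq * qint k" using qint_add[of 1 k] by (simp add: qint_Suc0)
  have q2: "qint (Suc k) = qint k + qq ^ k" using qint_add[of k 1] by (simp add: qint_Suc0)
  have "Fc k k * qint (Suc k) = qb (2 * k) k * qint (Suc k) - qq * (qb (2 * k) j * qint (Suc k))"
    unfolding Fc_def w by (simp add: algebra_simps)
  also have "\<dots> = qb (2 * k) k" unfolding a by (subst q1) (simp add: algebra_simps)
  finally have 1: "Fc k k * qint (Suc k) = qb (2 * k) k" .
  have "Gc k k * qint (Suc k) = qb (2 * k) k * qint (Suc k) - qb (2 * k) j * qint (Suc k)"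
    unfolding Gc_def w by (simp add: algebra_simps)
  also have "\<dots> = qq ^ k * qb (2 * k) k" unfolding a by (subst q2) (simp add: algebra_simps)
  finally show ?thesis using 1 by simp
qed

theorem theorem1p1:
  fixes n l :: nat and r :: "step \<Rightarrow> nat"
  assumes "inj r" and "n \<le> l" and "l \<le> 2 * n"
  shows "(r E < r N \<longrightarrow>
           (\<Sum>W\<in>Sch_L n l. monom 1 (maj r W)) =
             qbinom (2 * (l - n)) (l - n) * qbinom l (2 * n - l) div qint (l - n + 1))
       \<and> (r N < r E \<longrightarrow>
           (\<Sum>W\<in>Sch_L n l. monom 1 (maj r W)) =
             monom 1 (l - n) * qbinom (2 * (l - n)) (l - n) * qbinom l (2 * n - l) div qint (l - n + 1))"
proof -
  define k where "k = l - n"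
  have S: "(\<Sum>W\<in>Sch_L n l. monom 1 (maj r W)) = qb l (2 * n - l) * BS r k k"
    using sch_sum[OF assms] by (simp add: monom1 k_def)
  have nz: "qint (Suc k) \<noteq> 0" by (rule qint_nz) simp
  show ?thesis
  proof (intro conjI impI)
    assume EN: "r E < r N"
    have c1: "qbinom (2 * k) k = Fc k k * qint (Suc k)" using cat_rel[of k] by (simp add: qbinom_qb)
    have "qbinom (2 * (l - n)) (l - n) * qbinom l (2 * n - l) div qint (l - n + 1)
        = (Fc k k * qint (Suc k)) * qbinom l (2 * n - l) div qint (Suc k)"
      unfolding k_def[symmetric] c1[symmetric] by simp
    also have "\<dots> = (Fc k k * qb l (2 * n - l)) * qint (Suc k) div qint (Suc k)"
      by (simp add: qbinom_qb mult_ac)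
    also have "\<dots> = Fc k k * qb l (2 * n - l)" using nz by (rule nonzero_mult_div_cancel_right)
    finally show "(\<Sum>W\<in>Sch_L n l. monom 1 (maj r W)) =
             qbinom (2 * (l - n)) (l - n) * qbinom l (2 * n - l) div qint (l - n + 1)"
      using S BS_EN[OF EN, of k k] by simp
  next
    assume NE: "r N < r E"
    have c1: "monom 1 k * qbinom (2 * k) k = Gc k k * qint (Suc k)" using cat_rel[of k] by (simp add: qbinom_qb monom1)
    have "monom 1 (l - n) * qbinom (2 * (l - n)) (l - n) * qbinom l (2 * n - l) div qint (l - n + 1)
        = (Gc k k * qint (Suc k)) * qbinom l (2 * n - l) div qint (Suc k)"
      unfolding k_def[symmetric] c1[symmetric] by simp
    also have "\<dots> = (Gc k k * qb l (2 * n - l)) * qint (Suc k) div qint (Suc k)"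
      by (simp add: qbinom_qb mult_ac)
    also have "\<dots> = Gc k k * qb l (2 * n - l)" using nz by (rule nonzero_mult_div_cancel_right)
    finally show "(\<Sum>W\<in>Sch_L n l. monom 1 (maj r W)) =
             monom 1 (l - n) * qbinom (2 * (l - n)) (l - n) * qbinom l (2 * n - l) div qint (l - n + 1)"
      using S BS_NE[OF NE, of k k] by simp
  qed
qed

end
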